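(* Let $\lambda>0$, $Y\sim\mathrm{Poi}(\lambda)$, and let $g_1:\{0,1,2,\dots\}\to\mathbb R$ be defined by $g_1(0)=0$ and, for integers $w\ge1$, $$g_1(w)=\frac{e^\lambda w!}{\lambda^{w+1}}P(Y\le w)-\frac{e^\lambda (w-1)!}{\lambda^{w}}P(Y\le w-1).$$ Then $g_1$ is non-negative and non-decreasing, and for all integers $w\ge1$, $$g_1(w)\le\frac1\lambda+\frac{(w-1)!\,(w-\lambda)_+}{\lambda^{w+1}}e^\lambda ,$$ where $x_+=\max(x,0)$.
   Context: $\mathrm{Poi}(\lambda)$ is the Poisson distribution with mean $\lambda$. *)

theory Defs
  imports "HOL-Probability.Probability"
begin

definition poi_cdf :: "real \<Rightarrow> nat \<Rightarrow> real" where
  "poi_cdf lam w = measure_pmf.prob (poisson_pmf lam) {..w}"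

definition g1 :: "real \<Rightarrow> nat \<Rightarrow> real" where
  "g1 lam w = (if w = 0 then 0 else
      exp lam * fact w / lam ^ (w + 1) * poi_cdf lam w
      - exp lam * fact (w - 1) / lam ^ w * poi_cdf lam (w - 1))"

end

theory Submission
  imports Defs
begin

lemma pascal_sum:
  fixes f :: "nat \<Rightarrow> real"
  shows "(\<Sum>j\<le>Suc n. real (Suc n choose j) * f j) =
         (\<Sum>j\<le>n. real (n choose j) * f j) + (\<Sum>j\<le>n. real (n choose j) * f (Suc j))"
proof -
  have "(\<Sum>j\<le>Suc n. real (Suc n choose j) * f j) =
        f 0 + (\<Sum>j\<le>n. real (Suc n choose Suc j) * f (Suc j))"
    by (subst sum.atMost_Suc_shift) simp
  also have "\<dots> = f 0 + (\<Sum>j\<le>n. real (n choose Suc j) * f (Suc j)) + (\<Sum>j\<le>n. real (n choose j) * f (Suc j))"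
    by (simp add: sum.distrib algebra_simps)
  also have "f 0 + (\<Sum>j\<le>n. real (n choose Suc j) * f (Suc j)) = (\<Sum>j\<le>Suc n. real (n choose j) * f j)"
    by (subst sum.atMost_Suc_shift) simp
  also have "\<dots> = (\<Sum>j\<le>n. real (n choose j) * f j)"
    by simp
  finally show ?thesis .
qed

definition H :: "real \<Rightarrow> nat \<Rightarrow> nat \<Rightarrow> real" where
  "H c m n = (\<Sum>j\<le>n. real (n choose j) * (fact (j + m) * c ^ j))"

lemma H_Suc: "H c m (Suc n) = H c m n + c * H c (Suc m) n"
  unfolding H_def
  by (subst pascal_sum) (simp add: sum_distrib_left algebra_simps)

lemma H_nonneg: "c \<ge> 0 \<Longrightarrow> H c m n \<ge> 0"
  unfolding H_def by (intro sum_nonneg) simp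

definition S :: "real \<Rightarrow> nat \<Rightarrow> real" where
  "S lam n = (\<Sum>k\<le>n. lam ^ k / fact k)"

definition A :: "real \<Rightarrow> nat \<Rightarrow> real" where
  "A lam n = fact n * S lam n / lam ^ (n + 1)"

lemma exp_poi: "lam > 0 \<Longrightarrow> exp lam * poi_cdf lam w = S lam w"
  unfolding poi_cdf_def S_def
  by (simp add: measure_measure_pmf_finite sum_distrib_left exp_minus field_simps)

lemma poi_le: "lam > 0 \<Longrightarrow> S lam w \<le> exp lam"
proof -
  assume l: "lam > 0"
  have "poi_cdf lam w \<le> 1" unfolding poi_cdf_def by simp
  hence "exp lam * poi_cdf lam w \<le> exp lam * 1" by (intro mult_left_mono) auto
  thus ?thesis using exp_poi[OF l] by simp
qed

lemma g1_A: "lam > 0 \<Longrightarrow> g1 lam (Suc n) = A lam (Suc n) - A lam n"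
  unfolding g1_def A_def using exp_poi[of lam]
  by (simp add: field_simps)

lemma A_H: "lam > 0 \<Longrightarrow> A lam n = (1/lam) * H (1/lam) 0 n"
proof -
  assume l: "lam > 0"
  have "A lam n = (\<Sum>k\<le>n. fact n * lam ^ k / fact k / lam ^ (n + 1))"
    unfolding A_def S_def by (simp add: sum_distrib_left sum_divide_distrib)
  also have "\<dots> = (\<Sum>k=0..n. fact n * lam ^ k / fact k / lam ^ (n + 1))"
    by (simp add: atMost_atLeast0)
  also have "\<dots> = (\<Sum>j=0..n. fact n * lam ^ (n - j) / fact (n - j) / lam ^ (n + 1))"
    by (subst sum.atLeastAtMost_rev) simp
  also have "\<dots> = (\<Sum>j=0..n. (1/lam) * (real (n choose j) * (fact (j + 0) * (1/lam) ^ j)))"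
  proof (rule sum.cong[OF refl])
    fix j assume "j \<in> {0..n}"
    hence j: "j \<le> n" by simp
    have "lam ^ (n + 1) = lam ^ ((n - j) + j + 1)" using j by simp
    hence e: "lam ^ (n + 1) = lam ^ (n - j) * lam ^ j * lam"
      by (simp only: power_add power_one_right)
    show "fact n * lam ^ (n - j) / fact (n - j) / lam ^ (n + 1) =
          (1/lam) * (real (n choose j) * (fact (j + 0) * (1/lam) ^ j))"
    proof -
      have e2: "lam ^ j * lam ^ (n - j) = lam ^ n" using j by (simp flip: power_add)
      show ?thesis using l j by (simp add: binomial_fact e e2 field_simps)
    qed
  qed
  also have "\<dots> = (1/lam) * H (1/lam) 0 n"
    unfolding H_def by (simp add: sum_distrib_left atMost_atLeast0)
  finally show ?thesis .
qed

lemma A_Suc: "lam > 0 \<Longrightarrow> A lam (Suc n) = (Suc n) / lam * A lam n + 1 / lam"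
proof -
  assume l: "lam > 0"
  have "A lam (Suc n) = fact (Suc n) * (S lam n + lam ^ Suc n / fact (Suc n)) / lam ^ (n + 2)"
    unfolding A_def S_def by simp
  also have "\<dots> = (Suc n) * (fact n * S lam n) / lam ^ (n + 2) + 1 / lam"
    using l by (simp add: distrib_left add_divide_distrib fact_Suc[of n] del: fact_Suc)
  also have "\<dots> = (Suc n) / lam * A lam n + 1 / lam"
    unfolding A_def using l by (simp add: field_simps)
  finally show ?thesis .
qed

theorem lemma4p3:
  fixes lam :: real
  assumes "lam > 0"
  shows "(\<forall>w. g1 lam w \<ge> 0) \<and> mono (g1 lam) \<and>
         (\<forall>w::nat. w \<ge> 1 \<longrightarrow>
            g1 lam w \<le> 1 / lam + fact (w - 1) * max (real w - lam) 0 / lam ^ (w + 1) * exp lam)"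
proof -
  define c where "c = 1 / lam"
  have c0: "c \<ge> 0" using assms by (simp add: c_def)
  have gS: "g1 lam (Suc n) = c * c * H c 1 n" for n
  proof -
    have "g1 lam (Suc n) = c * H c 0 (Suc n) - c * H c 0 n"
      using g1_A[OF assms, of n] A_H[OF assms, of n] A_H[OF assms, of "Suc n"] unfolding c_def by simp
    also have "\<dots> = c * c * H c 1 n" unfolding H_Suc by (simp add: algebra_simps)
    finally show ?thesis .
  qed
  have nonneg: "g1 lam w \<ge> 0" for w
    using gS[of "w - 1"] H_nonneg[OF c0, of 1 "w - 1"] c0
    by (cases w) (simp_all add: g1_def)
  have "g1 lam n \<le> g1 lam (Suc n)" for n
  proof (cases n)
    case 0 thus ?thesis using nonneg[of 1] by (simp add: g1_def)
  next
    case (Suc m)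
    have "g1 lam (Suc (Suc m)) = g1 lam (Suc m) + c * c * c * H c 2 m"
      using gS[of m] gS[of "Suc m"] H_Suc[of c 1 m] by (simp add: algebra_simps numeral_2_eq_2)
    moreover have "c * c * c * H c 2 m \<ge> 0" using c0 H_nonneg[OF c0] by simp
    ultimately show ?thesis using Suc by simp
  qed
  hence mono: "mono (g1 lam)" by (rule incseq_SucI)
  have bound: "g1 lam w \<le> 1 / lam + fact (w - 1) * max (real w - lam) 0 / lam ^ (w + 1) * exp lam"
    if w: "w \<ge> 1" for w
  proof -
    obtain n where n: "w = Suc n" using w by (cases w) auto
    have "g1 lam w = (real w - lam) / lam * A lam n + 1 / lam"
      using g1_A[OF assms, of n] A_Suc[OF assms, of n] assms n by (simp add: field_simps)
    also have "(real w - lam) / lam * A lam n \<le> fact (w - 1) * max (real w - lam) 0 / lam ^ (w + 1) * exp lam"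
    proof -
      have "(real w - lam) / lam * A lam n \<le> max (real w - lam) 0 / lam * A lam n"
        using assms by (intro mult_right_mono divide_right_mono) (auto simp: A_def S_def intro!: divide_nonneg_pos sum_nonneg mult_nonneg_nonneg)
      also have "\<dots> = fact n * max (real w - lam) 0 / lam ^ (w + 1) * S lam n"
        unfolding A_def n by (simp add: field_simps)
      also have "\<dots> \<le> fact n * max (real w - lam) 0 / lam ^ (w + 1) * exp lam"
        using assms poi_le[OF assms, of n] by (intro mult_left_mono) auto
      finally show ?thesis using n by simp
    qed
    finally show ?thesis by simp
  qed
  show ?thesis using nonneg mono bound by blast
qed

end
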